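(* Let $A,B,C$, $L,\mu,\mu_x$, $\kappa$, $\kappa_x$ be as below, let $r\ge2\kappa$, $\eta_x=\frac{1}{4rL}$, $\eta_y=\frac{1}{4L}$ (so $r=\eta_y/\eta_x$), and $M=\begin{pmatrix}-C & -B\\ rB^\top & -rA\end{pmatrix}$. Let $\rho_1$ be the spectral radius of $I+\eta_xM$ and $\rho_2$ the spectral radius of $I+\eta_xM+\eta_x^2M^2$. Then $$\max\{\rho_1,\rho_2\}\le1-\frac{1}{64\,r\kappa_x}.$$
   Context: $A\in\mathbb{R}^{m\times m}$, $C\in\mathbb{R}^{n\times n}$ symmetric, $B\in\mathbb{R}^{n\times m}$, with $\mu I\preceq A\preceq LI$ ($0<\mu\le L$), $\|B\|_2\le L$, $\|C\|_2\le L$, and $C+BA^{-1}B^\top\succ0$. $\mu_x=\min\{L,\lambda_{\min}(C+BA^{-1}B^\top)\}$, $\kappa=L/\mu$, $\kappa_x=L/\mu_x$. The spectral radius is the largest modulus of a (complex) eigenvalue. *)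

theory Defs
  imports "HOL-Analysis.Analysis"
begin

definition loewner_le :: "real^'k^'k \<Rightarrow> real^'k^'k \<Rightarrow> bool" where
  "loewner_le X Y \<longleftrightarrow> (\<forall>x. x \<bullet> (X *v x) \<le> x \<bullet> (Y *v x))"

definition pos_def_mat :: "real^'k^'k \<Rightarrow> bool" where
  "pos_def_mat S \<longleftrightarrow> (\<forall>x. x \<noteq> 0 \<longrightarrow> x \<bullet> (S *v x) > 0)"

definition spec_norm :: "real^'a^'b \<Rightarrow> real" where
  "spec_norm B = onorm (\<lambda>x. B *v x)"

definition real_eigenvalues :: "real^'k^'k \<Rightarrow> real set" where
  "real_eigenvalues S = {c. \<exists>v. v \<noteq> 0 \<and> S *v v = c *s v}"

definition lambda_min :: "real^'k^'k \<Rightarrow> real" where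
  "lambda_min S = Min (real_eigenvalues S)"

definition cmat :: "real^'k^'k \<Rightarrow> complex^'k^'k" where
  "cmat M = (\<chi> i j. complex_of_real (M $ i $ j))"

definition complex_eigenvalues :: "real^'k^'k \<Rightarrow> complex set" where
  "complex_eigenvalues M = {c. \<exists>v. v \<noteq> 0 \<and> cmat M *v v = c *s v}"

definition spectral_radius :: "real^'k^'k \<Rightarrow> real" where
  "spectral_radius M = Max (cmod ` complex_eigenvalues M)"

definition block_M :: "real \<Rightarrow> real^'m^'m \<Rightarrow> real^'m^'n \<Rightarrow> real^'n^'n \<Rightarrow> real^('n + 'm)^('n + 'm)" where
  "block_M r A B C = (\<chi> i j. (case (i, j) of
      (Inl a, Inl b) \<Rightarrow> - (C $ a $ b)
    | (Inl a, Inr b) \<Rightarrow> - (B $ a $ b)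
    | (Inr a, Inl b) \<Rightarrow> r * (B $ b $ a)
    | (Inr a, Inr b) \<Rightarrow> - r * (A $ a $ b)))"

end

theory Submission
  imports Defs "HOL-Computational_Algebra.Fundamental_Theorem_Algebra"
begin


lemma poly_det: "poly (det (Q :: 'a::comm_ring_1 poly^'k^'k)) c = det (\<chi> i j. poly (Q$i$j) c)"
  unfolding det_def by (simp add: poly_sum poly_prod)

definition chp :: "complex^'k^'k \<Rightarrow> complex poly" where
  "chp Z = det (\<chi> i j. [: - (Z$i$j), (if i = j then 1 else 0) :])"

lemma chp_eval: "poly (chp Z) c = det (\<chi> i j. (if i = j then c else 0) - Z$i$j)"
  unfolding chp_def poly_det by (rule arg_cong[where f=det]) (auto simp: vec_eq_iff)

lemma eig_iff_root:
  fixes Z :: "complex^'k^'k"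
  shows "(\<exists>v. v \<noteq> 0 \<and> Z *v v = c *s v) \<longleftrightarrow> poly (chp Z) c = 0"
proof -
  define D where "D = (\<chi> i j. (if i = j then c else 0) - Z$i$j)"
  have Dv: "D *v v = c *s v - Z *v v" for v
    by (simp add: vec_eq_iff D_def matrix_vector_mult_def left_diff_distrib sum_subtractf
        if_distrib[of "\<lambda>x. x * _"] cong: if_cong)
  have lin: "Vector_Spaces.linear (*s) (*s) ((*v) D)" by (rule matrix_vector_mul_linear_gen)
  have "det D \<noteq> 0 \<longleftrightarrow> inj ((*v) D)"
    using det_nz_iff_inj_gen[OF lin] by (simp add: matrix_of_matrix_vector_mul)
  also have "inj ((*v) D) \<longleftrightarrow> (\<forall>v. D *v v = 0 \<longrightarrow> v = 0)"
  proof
    assume "inj ((*v) D)" then show "\<forall>v. D *v v = 0 \<longrightarrow> v = 0"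
      by (metis injD matrix_vector_mult_0_right)
  next
    assume h: "\<forall>v. D *v v = 0 \<longrightarrow> v = 0"
    show "inj ((*v) D)"
    proof (rule injI)
      fix x y assume "D *v x = D *v y"
      then have "D *v (x - y) = 0" by (simp add: matrix_vector_mult_diff_distrib)
      then show "x = y" using h by auto
    qed
  qed
  finally have "det D = 0 \<longleftrightarrow> (\<exists>v. v \<noteq> 0 \<and> D *v v = 0)" by blast
  moreover have "D *v v = 0 \<longleftrightarrow> Z *v v = c *s v" for v by (auto simp: Dv)
  ultimately show ?thesis by (simp add: chp_eval D_def[symmetric])
qed


lemma coeff_lin_prod:
  fixes a :: "'i \<Rightarrow> 'a::idom"
  assumes "finite S"
  shows "coeff (\<Prod>i\<in>S. [: a i, 1 :]) (card S) = 1"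
proof -
  have "degree (\<Prod>i\<in>S. [: a i, 1 :]) = card S"
    by (subst degree_prod_eq_sum_degree) auto
  moreover have "lead_coeff (\<Prod>i\<in>S. [: a i, 1 :]) = 1"
    by (simp add: lead_coeff_prod)
  ultimately show ?thesis by simp
qed

lemma chp_coeff: "coeff (chp (Z::complex^'k^'k)) CARD('k) = 1"
proof -
  define Q where "Q = ((\<chi> i j. [: - (Z$i$j), (if i = j then 1 else 0) :]) :: complex poly^'k^'k)"
  have Qd: "degree (Q$i$j) \<le> (if i = j then 1 else 0)" for i j
    by (simp add: Q_def)
  have other: "coeff (\<Prod>i\<in>UNIV. Q $ i $ p i) CARD('k) = 0" if "p \<noteq> id" for p :: "'k \<Rightarrow> 'k"
  proof -
    obtain i0 where i0: "p i0 \<noteq> i0" using \<open>p \<noteq> id\<close> by (auto simp: fun_eq_iff)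
    have "degree (\<Prod>i\<in>UNIV. Q $ i $ p i) \<le> (\<Sum>i\<in>UNIV. degree (Q $ i $ p i))"
      using degree_prod_sum_le[of UNIV "\<lambda>i. Q $ i $ p i"] by (simp add: o_def)
    also have "\<dots> \<le> (\<Sum>i\<in>UNIV - {i0}. 1)"
    proof -
      have "(\<Sum>i\<in>UNIV. degree (Q $ i $ p i)) = degree (Q $ i0 $ p i0) + (\<Sum>i\<in>UNIV - {i0}. degree (Q $ i $ p i))"
        by (simp add: sum.remove)
      also have "degree (Q $ i0 $ p i0) = 0" using Qd[of i0 "p i0"] i0 by simp
      also have "(\<Sum>i\<in>UNIV - {i0}. degree (Q $ i $ p i)) \<le> (\<Sum>i\<in>UNIV - {i0}. 1)"
        by (rule sum_mono) (metis Qd le_SucI le_zero_eq One_nat_def)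
      finally show ?thesis by simp
    qed
    also have "\<dots> < CARD('k)" by simp
    finally show ?thesis by (simp add: coeff_eq_0)
  qed
  have idt: "coeff (\<Prod>i\<in>UNIV. Q $ i $ id i) CARD('k) = 1"
    using coeff_lin_prod[of UNIV "\<lambda>i. - (Z$i$i)"] by (simp add: Q_def)
  have "coeff (chp Z) CARD('k) = (\<Sum>p | p permutes UNIV. of_int (sign p) * coeff (\<Prod>i\<in>UNIV. Q $ i $ p i) CARD('k))"
    unfolding chp_def Q_def[symmetric] det_def coeff_sum
    by (simp add: of_int_poly)
  also have "\<dots> = of_int (sign (id::'k\<Rightarrow>'k)) * coeff (\<Prod>i\<in>UNIV. Q $ i $ id i) CARD('k)
     + (\<Sum>p \<in> {p. p permutes UNIV} - {id}. of_int (sign p) * coeff (\<Prod>i\<in>UNIV. Q $ i $ p i) CARD('k))"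
    by (subst sum.remove[of _ id]) (auto simp: permutes_id finite_permutations)
  also have "(\<Sum>p \<in> {p. p permutes UNIV} - {id}. of_int (sign p) * coeff (\<Prod>i\<in>UNIV. Q $ i $ p i) CARD('k)) = 0"
    by (rule sum.neutral) (auto simp: other)
  finally show ?thesis using idt by (simp add: sign_id)
qed

lemma chp_deg: "degree (chp (Z::complex^'k^'k)) \<ge> 1" "chp Z \<noteq> 0"
proof -
  have h1: "CARD('k) \<le> degree (chp Z)" by (rule le_degree) (simp add: chp_coeff)
  have h2: "CARD('k) \<ge> 1" by (simp add: Suc_le_eq)
  show "degree (chp Z) \<ge> 1" using h1 h2 by linarith
  then show "chp Z \<noteq> 0" by auto
qed

lemma ceig_eq: "complex_eigenvalues N = {c. poly (chp (cmat N)) c = 0}"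
  unfolding complex_eigenvalues_def using eig_iff_root by blast

lemma ceig_finite: "finite (complex_eigenvalues N)"
  unfolding ceig_eq using poly_roots_finite chp_deg(2) by blast

lemma ceig_ne: "complex_eigenvalues N \<noteq> {}"
proof -
  have "\<not> constant (poly (chp (cmat N)))" using chp_deg(1)[of "cmat N"] by (simp add: constant_degree)
  then obtain z where "poly (chp (cmat N)) z = 0" using fundamental_theorem_of_algebra by blast
  then show ?thesis unfolding ceig_eq by blast
qed


definition rv :: "complex^'k \<Rightarrow> real^'k" where "rv w = (\<chi> i. Re (w$i))"
definition iv :: "complex^'k \<Rightarrow> real^'k" where "iv w = (\<chi> i. Im (w$i))"

lemma cmat_comp: "(cmat N *v w) $ i = (\<Sum>j\<in>UNIV. complex_of_real (N$i$j) * w$j)"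
  by (simp add: cmat_def matrix_vector_mult_def)

lemma rv_cmat: "rv (cmat N *v w) = N *v rv w"
  by (simp add: vec_eq_iff rv_def cmat_def Re_sum matrix_vector_mult_def)

lemma iv_cmat: "iv (cmat N *v w) = N *v iv w"
  by (simp add: vec_eq_iff iv_def cmat_def Im_sum matrix_vector_mult_def)

lemma rv_scale: "rv (c *s w) = Re c *\<^sub>R rv w - Im c *\<^sub>R iv w"
  by (simp add: vec_eq_iff rv_def iv_def)

lemma iv_scale: "iv (c *s w) = Im c *\<^sub>R rv w + Re c *\<^sub>R iv w"
  by (simp add: vec_eq_iff rv_def iv_def)

lemma rv_iv_0: "w \<noteq> 0 \<Longrightarrow> rv w \<noteq> 0 \<or> iv w \<noteq> 0"
  by (auto simp: vec_eq_iff rv_def iv_def complex_eq_iff)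

lemma cmat_add: "cmat (X + Y) *v w = cmat X *v w + cmat Y *v w"
  by (simp add: vec_eq_iff cmat_comp distrib_right sum.distrib)

lemma cmat_scale: "cmat (k *\<^sub>R X) *v w = complex_of_real k *s (cmat X *v w)"
  by (simp add: vec_eq_iff cmat_comp sum_distrib_left mult.assoc)

lemma cmat_one: "cmat (mat 1) *v w = w"
proof -
  have "(\<Sum>j\<in>UNIV. complex_of_real (mat 1 $ i $ j) * w$j) = (\<Sum>j\<in>UNIV. if i = j then w$j else 0)" for i
    by (rule sum.cong) (auto simp: mat_def)
  then show ?thesis by (simp add: vec_eq_iff cmat_comp)
qed

lemma cmat_mult: "cmat (X ** Y) *v w = cmat X *v (cmat Y *v w)"
proof -
  have "cmat (X ** Y) = cmat X ** cmat Y"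
    by (simp add: vec_eq_iff cmat_def matrix_matrix_mult_def)
  then show ?thesis by (simp add: matrix_vector_mul_assoc)
qed

lemma mv_smult: "(Z::complex^'k^'k) *v (c *s x) = c *s (Z *v x)"
  by (simp add: vec_eq_iff matrix_vector_mult_def sum_distrib_left algebra_simps)

lemma eig_N1:
  assumes "c \<in> complex_eigenvalues (mat 1 + \<eta> *\<^sub>R N)" "\<eta> \<noteq> 0"
  shows "\<exists>l\<in>complex_eigenvalues N. c = 1 + complex_of_real \<eta> * l"
proof -
  obtain w where w: "w \<noteq> 0" "cmat (mat 1 + \<eta> *\<^sub>R N) *v w = c *s w"
    using assms(1) unfolding complex_eigenvalues_def by blast
  define e where "e = complex_of_real \<eta>"
  have e0: "e \<noteq> 0" using assms(2) by (simp add: e_def)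
  have h: "w + e *s (cmat N *v w) = c *s w" using w(2) by (simp add: cmat_add cmat_scale cmat_one e_def)
  have "cmat N *v w = ((c - 1) / e) *s w"
  proof -
    have "\<And>i. w$i + e * (cmat N *v w)$i = c * w$i" using h by (simp add: vec_eq_iff)
    then show ?thesis using e0 by (simp add: vec_eq_iff field_simps)
  qed
  then have "(c - 1) / e \<in> complex_eigenvalues N" using w(1) unfolding complex_eigenvalues_def by blast
  moreover have "c = 1 + e * ((c - 1) / e)" using e0 by simp
  ultimately show ?thesis unfolding e_def by blast
qed

lemma eig_N2:
  assumes "c \<in> complex_eigenvalues (mat 1 + \<eta> *\<^sub>R N + \<eta>\<^sup>2 *\<^sub>R (N ** N))" "\<eta> \<noteq> 0"
  shows "\<exists>l\<in>complex_eigenvalues N. c = 1 + complex_of_real \<eta> * l + (complex_of_real \<eta>)\<^sup>2 * l\<^sup>2"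
proof -
  obtain w where w: "w \<noteq> 0" "cmat (mat 1 + \<eta> *\<^sub>R N + \<eta>\<^sup>2 *\<^sub>R (N ** N)) *v w = c *s w"
    using assms(1) unfolding complex_eigenvalues_def by blast
  define e where "e = complex_of_real \<eta>"
  have e0: "e \<noteq> 0" using assms(2) by (simp add: e_def)
  define Z where "Z = cmat N"
  have h: "w + e *s (Z *v w) + e\<^sup>2 *s (Z *v (Z *v w)) = c *s w" using w(2)
    by (simp add: cmat_add cmat_scale cmat_one cmat_mult e_def Z_def)
  then have hc: "\<And>i. w$i + e * (Z *v w)$i + e\<^sup>2 * (Z *v (Z *v w))$i = c * w$i"
    by (simp add: vec_eq_iff)
  define s where "s = csqrt (4 * c - 3)"
  have s2: "s\<^sup>2 = 4 * c - 3" by (simp add: s_def)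
  define \<alpha> where "\<alpha> = (-1 + s) / (2 * e)"
  define \<beta> where "\<beta> = (-1 - s) / (2 * e)"
  have sab: "\<alpha> + \<beta> = - 1 / e" using e0 by (simp add: \<alpha>_def \<beta>_def field_simps)
  have "\<alpha> * \<beta> = (1 - s\<^sup>2) / (4 * e\<^sup>2)" using e0
    by (simp add: \<alpha>_def \<beta>_def field_simps power2_eq_square)
  also have "\<dots> = (1 - c) / e\<^sup>2" unfolding s2 using e0 by (simp add: field_simps)
  finally have pab: "\<alpha> * \<beta> = (1 - c) / e\<^sup>2" .
  have rootg: "c = 1 + e * x + e\<^sup>2 * x\<^sup>2" if "x = \<alpha> \<or> x = \<beta>" for x
  proof -
    have "e\<^sup>2 * x\<^sup>2 + e * x = e\<^sup>2 * x * (x + 1 / e)" using e0 by (simp add: field_simps power2_eq_square)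
    also have "x + 1 / e = - (\<alpha> + \<beta> - x)" using sab by (simp add: algebra_simps)
    also have "e\<^sup>2 * x * (- (\<alpha> + \<beta> - x)) = - e\<^sup>2 * (\<alpha> * \<beta>)" using that by (auto simp: algebra_simps)
    also have "\<dots> = c - 1" using pab e0 by (simp add: field_simps)
    finally show ?thesis by (simp add: algebra_simps)
  qed
  define x where "x = Z *v w - \<beta> *s w"
  have key: "Z *v x = \<alpha> *s x"
  proof -
    have "(Z *v x)$i - \<alpha> * x$i = 0" for i
    proof -
      have "(Z *v x)$i - \<alpha> * x$i = (Z *v (Z *v w))$i - (\<alpha> + \<beta>) * (Z *v w)$i + (\<alpha> * \<beta>) * w$i"
        by (simp add: x_def matrix_vector_mult_diff_distrib mv_smult algebra_simps)
      also have "\<dots> = (Z *v (Z *v w))$i + (1 / e) * (Z *v w)$i + ((1 - c) / e\<^sup>2) * w$i"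
        using sab pab by simp
      also have "\<dots> = ((w$i + e * (Z *v w)$i + e\<^sup>2 * (Z *v (Z *v w))$i) - c * w$i) / e\<^sup>2"
        using e0 by (simp add: field_simps power2_eq_square)
      also have "\<dots> = 0" using hc[of i] by simp
      finally show ?thesis .
    qed
    then show ?thesis by (simp add: vec_eq_iff)
  qed
  show ?thesis
  proof (cases "x = 0")
    case True
    then have "Z *v w = \<beta> *s w" by (simp add: x_def)
    then have "\<beta> \<in> complex_eigenvalues N" using w(1) unfolding complex_eigenvalues_def Z_def by blast
    then show ?thesis using rootg[of \<beta>] by (auto simp: e_def)
  next
    case False
    then have "\<alpha> \<in> complex_eigenvalues N" using key unfolding complex_eigenvalues_def Z_def by blast
    then show ?thesis using rootg[of \<alpha>] by (auto simp: e_def)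
  qed
qed


lemma inner_mat_T: "(x::real^'m) \<bullet> ((A::real^'n^'m) *v y) = (transpose A *v x) \<bullet> y"
  by (metis dot_lmul_matrix transpose_matrix_vector)

lemma inner_sym: "transpose (A::real^'n^'n) = A \<Longrightarrow> x \<bullet> (A *v y) = y \<bullet> (A *v x)"
  by (metis inner_mat_T inner_commute)

lemma realeig_finite: "finite (real_eigenvalues (S::real^'k^'k))"
proof -
  have "real_eigenvalues S \<subseteq> Re ` complex_eigenvalues S"
  proof
    fix c assume "c \<in> real_eigenvalues S"
    then obtain v where v: "v \<noteq> 0" "S *v v = c *s v" unfolding real_eigenvalues_def by blast
    define w where "w = (\<chi> i. complex_of_real (v$i))"
    have "w \<noteq> 0" using v(1) by (auto simp: w_def vec_eq_iff)
    moreover have "cmat S *v w = complex_of_real c *s w"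
    proof -
      have "(S *v v)$i = c * v$i" for i using v(2) by (simp add: vec_eq_iff)
      then show ?thesis
        by (simp add: vec_eq_iff w_def cmat_def matrix_vector_mult_def flip: of_real_mult of_real_sum)
    qed
    ultimately have "complex_of_real c \<in> complex_eigenvalues S" unfolding complex_eigenvalues_def by blast
    then show "c \<in> Re ` complex_eigenvalues S" by force
  qed
  then show ?thesis using finite_subset ceig_finite by blast
qed

lemma rayleigh:
  fixes S :: "real^'k^'k"
  assumes sym: "transpose S = S"
  shows "\<exists>l\<in>real_eigenvalues S. \<forall>y. l * (y \<bullet> y) \<le> y \<bullet> (S *v y)"
proof -
  define f where "f y = y \<bullet> (S *v y)" for y :: "real^'k"
  have cont: "continuous_on (sphere 0 1) f"
    unfolding f_def by (intro continuous_intros linear_continuous_on) (simp add: bounded_linear_inner_left)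
  obtain u :: "real^'k" where "norm u = 1" using vector_choose_size[of 1] by auto
  then have ne: "sphere (0::real^'k) 1 \<noteq> {}" by auto
  obtain y0 where y0: "y0 \<in> sphere 0 1" "\<And>y. y \<in> sphere 0 1 \<Longrightarrow> f y0 \<le> f y"
    using continuous_attains_inf[OF compact_sphere ne cont] by blast
  define l where "l = f y0"
  have n1: "y0 \<bullet> y0 = 1" using y0(1) by (simp add: dot_square_norm)
  have fscale: "f (a *\<^sub>R y) = a\<^sup>2 * f y" for a y
    by (simp add: f_def matrix_vector_mult_scaleR power2_eq_square)
  have lower: "l * (y \<bullet> y) \<le> f y" for y
  proof (cases "y = 0")
    case True then show ?thesis by (simp add: f_def)
  next
    case False
    have "(1 / norm y) *\<^sub>R y \<in> sphere 0 1" using False by simp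
    then have "l \<le> f ((1 / norm y) *\<^sub>R y)" using y0(2) by (simp add: l_def)
    also have "\<dots> = f y / (norm y)\<^sup>2" by (simp add: fscale power_divide)
    finally show ?thesis using False by (simp add: dot_square_norm field_simps)
  qed
  define g where "g = S *v y0 - l *\<^sub>R y0"
  define q where "q = f g - l * (g \<bullet> g)"
  have q0: "q \<ge> 0" using lower[of g] by (simp add: q_def)
  have expand: "f (y0 + s *\<^sub>R g) - l * ((y0 + s *\<^sub>R g) \<bullet> (y0 + s *\<^sub>R g)) = 2 * s * (g \<bullet> g) + s\<^sup>2 * q" for s
  proof -
    have sy: "y0 \<bullet> (S *v g) = g \<bullet> (S *v y0)" using inner_sym[OF sym] .
    have e1: "f (y0 + s *\<^sub>R g) = l + 2 * s * (g \<bullet> (S *v y0)) + s\<^sup>2 * f g"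
      using sy by (simp add: f_def l_def matrix_vector_right_distrib matrix_vector_mult_scaleR inner_add_left inner_add_right power2_eq_square algebra_simps)
    have e2: "(y0 + s *\<^sub>R g) \<bullet> (y0 + s *\<^sub>R g) = 1 + 2 * s * (y0 \<bullet> g) + s\<^sup>2 * (g \<bullet> g)"
      using n1 by (simp add: inner_add_left inner_add_right inner_commute power2_eq_square algebra_simps)
    have e3: "g \<bullet> (S *v y0) = g \<bullet> g + l * (y0 \<bullet> g)"
      by (simp add: g_def inner_diff_right inner_commute algebra_simps)
    have "f (y0 + s *\<^sub>R g) - l * ((y0 + s *\<^sub>R g) \<bullet> (y0 + s *\<^sub>R g))
       = l + 2 * s * (g \<bullet> g + l * (y0 \<bullet> g)) + s\<^sup>2 * f g - l * (1 + 2 * s * (y0 \<bullet> g) + s\<^sup>2 * (g \<bullet> g))"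
      by (simp only: e1 e2 e3)
    also have "\<dots> = 2 * s * (g \<bullet> g) + s\<^sup>2 * q" by (simp add: q_def algebra_simps)
    finally show ?thesis .
  qed
  have gz: "g \<bullet> g = 0"
  proof (rule ccontr)
    assume "g \<bullet> g \<noteq> 0"
    then have G: "g \<bullet> g > 0" by (simp add: order_le_neq_trans)
    define s where "s = - (g \<bullet> g) / (q + 1)"
    have "0 \<le> f (y0 + s *\<^sub>R g) - l * ((y0 + s *\<^sub>R g) \<bullet> (y0 + s *\<^sub>R g))" using lower by simp
    also have "\<dots> = 2 * s * (g \<bullet> g) + s\<^sup>2 * q" by (rule expand)
    also have "\<dots> = s * (2 * (g \<bullet> g) + s * q)" by (simp add: power2_eq_square algebra_simps)
    also have "\<dots> < 0"
    proof (rule mult_neg_pos)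
      show "s < 0" using G q0 by (simp add: s_def divide_neg_pos add_pos_nonneg) 
      have "q / (q + 1) \<le> 1" using q0 by simp
      then have "(g \<bullet> g) * (q / (q + 1)) \<le> g \<bullet> g" using G mult_left_le[of "q / (q + 1)" "g \<bullet> g"] by linarith
      then have "s * q \<ge> - (g \<bullet> g)" by (simp add: s_def divide_minus_left times_divide_eq_right)
      then show "0 < 2 * (g \<bullet> g) + s * q" using G by linarith
    qed
    finally show False by simp
  qed
  then have "S *v y0 = l *s y0" by (simp add: g_def scalar_mult_eq_scaleR)
  moreover have "y0 \<noteq> 0" using n1 by auto
  ultimately have "l \<in> real_eigenvalues S" unfolding real_eigenvalues_def by blast
  then show ?thesis using lower unfolding f_def by blast
qed


definition tp :: "real^('n::finite + 'm::finite) \<Rightarrow> real^'n" where "tp w = (\<chi> a. w $ Inl a)"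
definition bt :: "real^('n::finite + 'm::finite) \<Rightarrow> real^'m" where "bt w = (\<chi> b. w $ Inr b)"

lemma sum_plus: "(\<Sum>i\<in>(UNIV::('n::finite + 'm::finite) set). f i) = (\<Sum>a\<in>UNIV. f (Inl a)) + (\<Sum>b\<in>UNIV. f (Inr b))"
  by (simp add: UNIV_Plus_UNIV[symmetric] sum.Plus o_def del: UNIV_Plus_UNIV)

lemma inner_split: "(w::real^('n::finite + 'm::finite)) \<bullet> w' = tp w \<bullet> tp w' + bt w \<bullet> bt w'"
  by (simp add: inner_vec_def tp_def bt_def sum_plus)

lemma w_zero: "(w::real^('n::finite + 'm::finite)) = 0 \<longleftrightarrow> tp w = 0 \<and> bt w = 0"
  by (metis inner_split inner_eq_zero_iff add_nonneg_eq_0_iff inner_ge_zero)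

lemma tp_ops: "tp (x + y) = tp x + tp y" "tp (x - y) = tp x - tp y" "tp (c *\<^sub>R x) = c *\<^sub>R tp x"
  by (simp_all add: vec_eq_iff tp_def)
lemma bt_ops: "bt (x + y) = bt x + bt y" "bt (x - y) = bt x - bt y" "bt (c *\<^sub>R x) = c *\<^sub>R bt x"
  by (simp_all add: vec_eq_iff bt_def)

lemma tp_M: "tp (block_M r A B C *v w) = - (C *v tp w) - B *v bt w"
  by (simp add: vec_eq_iff tp_def bt_def block_M_def matrix_vector_mult_def sum_plus sum_negf algebra_simps)

lemma bt_M: "bt (block_M r A B C *v w) = r *\<^sub>R (transpose B *v tp w) - r *\<^sub>R (A *v bt w)"
  by (simp add: vec_eq_iff tp_def bt_def block_M_def matrix_vector_mult_def sum_plus transpose_def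
      sum_distrib_left sum_negf algebra_simps)

lemma transpose_add': "transpose (X + Y) = transpose X + transpose Y"
  by (simp add: vec_eq_iff transpose_def)

locale SP =
  fixes A :: "real^'m^'m" and B :: "real^'m^'n" and C :: "real^'n^'n"
    and L \<mu> r :: real
  assumes mu_pos: "0 < \<mu>" and muL: "\<mu> \<le> L"
    and symA: "transpose A = A" and symC: "transpose C = C"
    and lowA: "loewner_le (\<mu> *\<^sub>R mat 1) A" and upA: "loewner_le A (L *\<^sub>R mat 1)"
    and nB: "spec_norm B \<le> L" and nC: "spec_norm C \<le> L"
    and pdS: "pos_def_mat (C + B ** matrix_inv A ** transpose B)"
    and rge: "r \<ge> 2 * (L / \<mu>)"
begin

definition mux where "mux = min L (lambda_min (C + B ** matrix_inv A ** transpose B))"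
abbreviation Ai where "Ai \<equiv> matrix_inv A"

lemma Lpos: "L > 0" using mu_pos muL by linarith
lemma rmu: "\<mu> * r \<ge> 2 * L"
proof -
  have "2 * L / \<mu> \<le> r" using rge by simp
  then show ?thesis using mu_pos by (simp add: pos_divide_le_eq mult.commute)
qed
lemma r2: "r \<ge> 2"
proof -
  have "L / \<mu> \<ge> 1" using mu_pos muL by simp
  then show ?thesis using rge by linarith
qed
lemma rpos: "r > 0" using r2 by linarith

lemma qA: "\<mu> * (x \<bullet> x) \<le> x \<bullet> (A *v x)" "x \<bullet> (A *v x) \<le> L * (x \<bullet> x)"
  using lowA upA unfolding loewner_le_def
  by (auto simp: scaleR_matrix_vector_assoc[symmetric])

lemma normB: "norm (B *v x) \<le> L * norm x"
proof -
  have "norm (B *v x) \<le> spec_norm B * norm x"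
    unfolding spec_norm_def using onorm[OF matrix_vector_mul_bounded_linear[of B]] by simp
  also have "\<dots> \<le> L * norm x" using nB by (simp add: mult_right_mono)
  finally show ?thesis .
qed

lemma normC: "norm (C *v x) \<le> L * norm x"
proof -
  have "norm (C *v x) \<le> spec_norm C * norm x"
    unfolding spec_norm_def using onorm[OF matrix_vector_mul_bounded_linear[of C]] by simp
  also have "\<dots> \<le> L * norm x" using nC by (simp add: mult_right_mono)
  finally show ?thesis .
qed

lemma qC: "\<bar>x \<bullet> (C *v x)\<bar> \<le> L * (x \<bullet> x)"
proof -
  have "\<bar>x \<bullet> (C *v x)\<bar> \<le> norm x * norm (C *v x)" by (rule Cauchy_Schwarz_ineq2)
  also have "\<dots> \<le> norm x * (L * norm x)" using normC by (simp add: mult_left_mono)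
  also have "\<dots> = L * (x \<bullet> x)" by (simp add: dot_square_norm power2_eq_square)
  finally show ?thesis .
qed

lemma invA: "invertible A"
proof -
  have "inj ((*v) A)"
  proof (rule injI)
    fix x y assume "A *v x = A *v y"
    then have "A *v (x - y) = 0" by (simp add: matrix_vector_mult_diff_distrib)
    then have "\<mu> * ((x - y) \<bullet> (x - y)) \<le> 0" using qA(1)[of "x - y"] by simp
    then have "(x - y) \<bullet> (x - y) \<le> 0" using mu_pos by (simp add: mult_le_0_iff)
    then have "(x - y) \<bullet> (x - y) = 0" using inner_ge_zero[of "x - y"] by linarith
    then show "x = y" by simp
  qed
  then have "det A \<noteq> 0"
    using det_nz_iff_inj_gen[OF matrix_vector_mul_linear_gen[of A]] by (simp add: matrix_of_matrix_vector_mul)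
  then show ?thesis by (simp add: invertible_det_nz)
qed

lemma Ai: "A ** Ai = mat 1" "Ai ** A = mat 1"
  using someI_ex[OF invA[unfolded invertible_def]] unfolding matrix_inv_def by auto

lemma AAi: "A *v (Ai *v v) = v" by (simp add: matrix_vector_mul_assoc Ai)
lemma AiA: "Ai *v (A *v v) = v" by (simp add: matrix_vector_mul_assoc Ai)

lemma symAi: "transpose Ai = Ai"
proof -
  have "transpose Ai ** A = mat 1"
    using arg_cong[OF Ai(1), of transpose] by (simp add: matrix_transpose_mul symA)
  then have "transpose Ai = transpose Ai ** (A ** Ai)" by (simp add: Ai)
  also have "\<dots> = Ai" by (simp add: matrix_mul_assoc \<open>transpose Ai ** A = mat 1\<close>)
  finally show ?thesis .
qed

lemma tAi: "0 \<le> v \<bullet> (Ai *v v)" "v \<bullet> (Ai *v v) \<le> (v \<bullet> v) / \<mu>"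
proof -
  define w where "w = Ai *v v"
  have v: "v = A *v w" by (simp add: w_def AAi)
  have t: "v \<bullet> (Ai *v v) = w \<bullet> (A *v w)" by (simp add: v AiA inner_commute)
  have a: "\<mu> * (w \<bullet> w) \<le> w \<bullet> (A *v w)" by (rule qA)
  have b: "w \<bullet> (A *v w) \<le> norm w * norm v" using Cauchy_Schwarz_ineq2[of w "A *v w"] v by simp
  have ww: "w \<bullet> w = (norm w)\<^sup>2" by (simp add: dot_square_norm)
  have "0 \<le> \<mu> * (w \<bullet> w)" using mu_pos by simp
  then show "0 \<le> v \<bullet> (Ai *v v)" using a t by linarith
  have c: "\<mu> * norm w \<le> norm v"
  proof (cases "norm w = 0")
    case True then show ?thesis by simp
  next
    case False
    then have "norm w > 0" by simp
    have "\<mu> * norm w * norm w \<le> norm v * norm w" using a b ww by (simp add: power2_eq_square algebra_simps)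
    then show ?thesis using \<open>norm w > 0\<close> by simp
  qed
  have "\<mu> * (w \<bullet> (A *v w)) \<le> \<mu> * (norm w * norm v)" using b mu_pos by (simp add: mult_left_mono)
  also have "\<dots> \<le> norm v * norm v" using mult_right_mono[OF c norm_ge_zero[of v]] by (simp add: mult.assoc)
  finally have "\<mu> * (v \<bullet> (Ai *v v)) \<le> v \<bullet> v" using t by (simp add: dot_square_norm power2_eq_square)
  then show "v \<bullet> (Ai *v v) \<le> (v \<bullet> v) / \<mu>" using mu_pos by (simp add: field_simps)
qed

abbreviation Sm where "Sm \<equiv> C + B ** matrix_inv A ** transpose B"

lemma Sm_mv: "Sm *v u = C *v u + B *v (Ai *v (transpose B *v u))"
  by (simp only: matrix_vector_mult_add_rdistrib matrix_vector_mul_assoc matrix_mul_assoc)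

lemma symSm: "transpose Sm = Sm"
proof -
  have "transpose Sm = transpose C + transpose (transpose B) ** transpose (B ** Ai)"
    by (simp only: transpose_add' matrix_transpose_mul)
  also have "\<dots> = C + B ** (Ai ** transpose B)"
    by (simp only: transpose_transpose matrix_transpose_mul symC symAi)
  also have "\<dots> = Sm" by (simp only: matrix_mul_assoc)
  finally show ?thesis .
qed

lemma mux: "0 < mux" "mux \<le> L" "\<And>y. mux * (y \<bullet> y) \<le> y \<bullet> (Sm *v y)"
proof -
  obtain l where l: "l \<in> real_eigenvalues Sm" "\<And>y. l * (y \<bullet> y) \<le> y \<bullet> (Sm *v y)"
    using rayleigh[OF symSm] by blast
  have fin: "finite (real_eigenvalues Sm)" by (rule realeig_finite)
  have ne: "real_eigenvalues Sm \<noteq> {}" using l(1) by blast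
  have le: "lambda_min Sm \<le> l" unfolding lambda_min_def by (rule Min_le[OF fin l(1)])
  have pos: "0 < c" if "c \<in> real_eigenvalues Sm" for c
  proof -
    from that obtain v where v: "v \<noteq> 0" "Sm *v v = c *s v" by (auto simp only: real_eigenvalues_def mem_Collect_eq)
    have "0 < v \<bullet> (Sm *v v)" using pdS v(1) unfolding pos_def_mat_def by blast
    also have "v \<bullet> (Sm *v v) = v \<bullet> (c *s v)" using v(2) by (rule arg_cong)
    also have "\<dots> = c * (v \<bullet> v)" by (simp only: scalar_mult_eq_scaleR inner_scaleR_right)
    finally have "0 < c * (v \<bullet> v)" .
    then show ?thesis by (meson mult_nonpos_nonneg inner_ge_zero not_le)
  qed
  have lm: "0 < lambda_min Sm" unfolding lambda_min_def using Min_gr_iff[OF fin ne] pos by blast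
  then show "0 < mux" using Lpos unfolding mux_def by linarith
  show "mux \<le> L" unfolding mux_def by linarith
  fix y :: "real^'n"
  have m1: "mux \<le> l" using le unfolding mux_def by linarith
  have "mux * (y \<bullet> y) \<le> l * (y \<bullet> y)"
    using mult_right_mono[OF m1 inner_ge_zero[of y]] .
  also have "\<dots> \<le> y \<bullet> (Sm *v y)" by (rule l(2))
  finally show "mux * (y \<bullet> y) \<le> y \<bullet> (Sm *v y)" .
qed

end


lemma numR:
  fixes z d :: real
  assumes "-1/4 \<le> z" "z \<le> -2*d" "0 \<le> d"
  shows "\<bar>1 + z\<bar> \<le> 1 - d" "\<bar>1 + z + z\<^sup>2\<bar> \<le> 1 - d"
proof -
  show "\<bar>1 + z\<bar> \<le> 1 - d" using assms by linarith
  have z0: "z \<le> 0" using assms by linarith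
  have "z * (1 + z) \<le> z * (3/4)" using z0 assms(1) by (intro mult_left_mono_neg) auto
  then have "z + z\<^sup>2 \<le> (3/4) * z" by (simp add: power2_eq_square algebra_simps)
  moreover have "z\<^sup>2 \<ge> 0" by simp
  moreover have "1 + z + z\<^sup>2 \<ge> 0" using assms(1) \<open>z\<^sup>2 \<ge> 0\<close> by linarith
  ultimately show "\<bar>1 + z + z\<^sup>2\<bar> \<le> 1 - d" using assms by linarith
qed

lemma numC:
  fixes x y k d :: real
  assumes x: "x \<le> -k/16" and s: "x\<^sup>2 + y\<^sup>2 \<le> k/16" and k: "0 < k" "k \<le> 1"
    and d: "0 \<le> d" "d \<le> k/128"
  shows "(1 + x)\<^sup>2 + y\<^sup>2 \<le> (1 - d)\<^sup>2"
    "(1 + x + x\<^sup>2 - y\<^sup>2)\<^sup>2 + (y + 2*x*y)\<^sup>2 \<le> (1 - d)\<^sup>2"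
proof -
  have dd: "1 - 2*d \<le> (1 - d)\<^sup>2" by (simp add: power2_eq_square algebra_simps)
  have "(1 + x)\<^sup>2 + y\<^sup>2 = 1 + 2*x + (x\<^sup>2 + y\<^sup>2)" by (simp add: power2_eq_square algebra_simps)
  also have "\<dots> \<le> 1 - 2*d" using x s d by linarith
  finally show "(1 + x)\<^sup>2 + y\<^sup>2 \<le> (1 - d)\<^sup>2" using dd by linarith
  define S where "S = x\<^sup>2 + y\<^sup>2"
  have id: "(1 + x + x\<^sup>2 - y\<^sup>2)\<^sup>2 + (y + 2*x*y)\<^sup>2 = 1 + 2*x + 3*x\<^sup>2 - y\<^sup>2 + S\<^sup>2 + 2*x*S"
    by (simp add: S_def power2_eq_square algebra_simps)
  have x0: "x \<le> 0" using x k by linarith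
  have S0: "0 \<le> S" by (simp add: S_def)
  have xS: "2*x*S \<le> 0" using x0 S0 by (simp add: mult_nonpos_nonneg)
  have S2: "S\<^sup>2 \<le> k/256"
  proof -
    have "S\<^sup>2 \<le> (k/16)\<^sup>2" using S0 s by (simp add: S_def power_mono)
    also have "\<dots> = k * k / 256" by (simp add: power2_eq_square)
    also have "\<dots> \<le> k / 256" using k by (simp add: mult_le_cancel_left1 divide_right_mono)
    finally show ?thesis .
  qed
  have x2: "x\<^sup>2 \<le> 1/16" using s k by (simp add: S_def) (smt (verit) zero_le_power2)
  have xm: "- x \<le> 1/4"
  proof (rule ccontr)
    assume "\<not> - x \<le> 1/4"
    then have "1/4 < -x" by simp
    then have "(1/4)\<^sup>2 < (-x)\<^sup>2" by (intro power_strict_mono) auto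
    then show False using x2 by (simp add: power2_eq_square)
  qed
  have "x\<^sup>2 = (-x) * (-x)" by (simp add: power2_eq_square)
  also have "\<dots> \<le> (-x) * (1/4)" using xm x0 by (intro mult_left_mono) auto
  finally have x3: "3 * x\<^sup>2 \<le> - 3 * x / 4" by simp
  have "y\<^sup>2 \<ge> 0" by simp
  have "(1 + x + x\<^sup>2 - y\<^sup>2)\<^sup>2 + (y + 2*x*y)\<^sup>2 \<le> 1 - 2*d"
    unfolding id using x3 xS S2 x d \<open>y\<^sup>2 \<ge> 0\<close> by linarith
  then show "(1 + x + x\<^sup>2 - y\<^sup>2)\<^sup>2 + (y + 2*x*y)\<^sup>2 \<le> (1 - d)\<^sup>2" using dd by linarith
qed


context SP begin

lemma real_case:
  assumes ev: "block_M r A B C *v w = a *\<^sub>R w" and w0: "w \<noteq> 0"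
  shows "- (r * L) \<le> a" "a \<le> - mux / 8"
proof -
  define u where "u = tp w"
  define v where "v = bt w"
  have e1: "- (C *v u) - B *v v = a *\<^sub>R u"
    using arg_cong[OF ev, of tp] by (simp add: tp_M tp_ops u_def v_def)
  have e2: "r *\<^sub>R (transpose B *v u) - r *\<^sub>R (A *v v) = a *\<^sub>R v"
    using arg_cong[OF ev, of bt] by (simp add: bt_M bt_ops u_def v_def)
  define U where "U = u \<bullet> u"
  define V where "V = v \<bullet> v"
  define P where "P = u \<bullet> (C *v u)"
  define Q where "Q = v \<bullet> (A *v v)"
  define X where "X = u \<bullet> (B *v v)"
  have U0: "0 \<le> U" and V0: "0 \<le> V" by (simp_all add: U_def V_def)
  have UV: "0 < U + V"
  proof -
    have "w \<bullet> w = U + V" by (simp add: inner_split U_def V_def u_def v_def)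
    moreover have "0 < w \<bullet> w" using w0 by simp
    ultimately show ?thesis by simp
  qed
  have XT: "v \<bullet> (transpose B *v u) = X"
    by (simp add: X_def inner_mat_T inner_commute)
  have d1: "- P - X = a * U"
  proof -
    have "u \<bullet> (- (C *v u) - B *v v) = u \<bullet> (a *\<^sub>R u)" using e1 by simp
    then show ?thesis by (simp add: P_def X_def U_def inner_diff_right)
  qed
  have d2: "r * X - r * Q = a * V"
  proof -
    have "v \<bullet> (r *\<^sub>R (transpose B *v u) - r *\<^sub>R (A *v v)) = v \<bullet> (a *\<^sub>R v)" using e2 by simp
    then show ?thesis using XT by (simp add: Q_def V_def inner_diff_right)
  qed
  have PL: "\<bar>P\<bar> \<le> L * U" using qC by (simp add: P_def U_def)
  have Qb: "\<mu> * V \<le> Q" "Q \<le> L * V" using qA[of v] by (simp_all add: Q_def V_def)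
  have Lp: "0 < L" by (rule Lpos)
  have rp: "0 < r" by (rule rpos)
  have Pd: "P = - X - a * U" using d1 by linarith
  have sumPQ: "r * (P + Q) = - a * (r * U + V)"
  proof -
    have "r * (P + Q) = - (r * X - r * Q) - r * a * U" unfolding Pd by (simp add: algebra_simps)
    also have "\<dots> = - (a * V) - r * a * U" using d2 by simp
    finally show ?thesis by (simp add: algebra_simps)
  qed
  show "- (r * L) \<le> a"
  proof -
    have "r * (P + Q) \<le> r * (L * U + L * V)" using PL Qb rp by (intro mult_left_mono) auto
    also have "\<dots> \<le> r * L * (r * U + V)"
    proof -
      have "L * U \<le> L * (r * U)" using r2 U0 Lp by (intro mult_left_mono) (auto simp: mult_le_cancel_right1)
      then have h: "r * (L * U) \<le> r * (L * (r * U))" using mult_left_mono[OF _ less_imp_le[OF rp]] by blast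
      have eq1: "r * (L*U + L*V) = r*(L*U) + r*L*V" by (simp add: algebra_simps)
      have eq2: "r*L*(r*U+V) = r*(L*(r*U)) + r*L*V" by (simp add: algebra_simps)
      show ?thesis unfolding eq1 eq2 by (rule add_right_mono[OF h])
    qed
    finally have "0 \<le> (a + r * L) * (r * U + V)" using sumPQ by (simp add: algebra_simps)
    moreover have "0 < r * U + V" using UV U0 r2
      by (smt (verit, best) mult_le_cancel_right1)
    ultimately show ?thesis by (simp add: zero_le_mult_iff)
  qed
  define s where "s = a / r"
  define t where "t = v \<bullet> (Ai *v v)"
  have tb: "0 \<le> t" "t \<le> V / \<mu>" using tAi[of v] by (simp_all add: t_def V_def)
  have g: "transpose B *v u = s *\<^sub>R v + A *v v"
  proof -
    have "r *\<^sub>R (transpose B *v u) = a *\<^sub>R v + r *\<^sub>R (A *v v)" using e2 by (simp add: algebra_simps)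
    then have "(1/r) *\<^sub>R (r *\<^sub>R (transpose B *v u)) = (1/r) *\<^sub>R (a *\<^sub>R v + r *\<^sub>R (A *v v))" by simp
    then show ?thesis using rp by (simp add: s_def scaleR_add_right)
  qed
  have XQ: "X = Q + s * V" using d2 rp by (simp add: s_def field_simps)
  have schur0: "mux * U \<le> u \<bullet> (Sm *v u)" using mux(3)[of u] by (simp add: U_def)
  have quad: "u \<bullet> (Sm *v u) = P + s\<^sup>2 * t + 2 * s * V + Q"
  proof -
    have q1: "u \<bullet> (Sm *v u) = P + (transpose B *v u) \<bullet> (Ai *v (transpose B *v u))"
      by (simp only: Sm_mv inner_add_right P_def inner_mat_T)
    have q2: "Ai *v (transpose B *v u) = s *\<^sub>R (Ai *v v) + v"
      by (simp only: g matrix_vector_right_distrib matrix_vector_mult_scaleR AiA)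
    have q3: "(A *v v) \<bullet> (Ai *v v) = V"
      using inner_sym[OF symA, of "Ai *v v" v] by (simp add: inner_commute AAi V_def)
    have q4: "(s *\<^sub>R v + A *v v) \<bullet> (s *\<^sub>R (Ai *v v) + v) = s\<^sup>2 * t + 2 * s * V + Q"
      using q3 by (simp add: inner_add_left inner_add_right t_def V_def Q_def inner_commute power2_eq_square algebra_simps)
    show ?thesis unfolding q1 q2 unfolding g q4 by simp
  qed
  have S1: "mux * U \<le> - a * U + s * V + s\<^sup>2 * t"
    using schur0 quad d1 XQ by (simp add: algebra_simps)
  have mp: "0 < mux" "mux \<le> L" by (rule mux(1), rule mux(2))
  have mup: "0 < \<mu>" by (rule mu_pos)
  show "a \<le> - mux / 8"
  proof (rule ccontr)
    assume "\<not> a \<le> - mux / 8"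
    then have aa: "- mux / 8 < a" by simp
    have Uz: "U = 0"
    proof (cases "0 \<le> a")
      case True
      then have s0: "0 \<le> s" using rp by (simp add: s_def)
      have i1: "\<mu> * (s * V) \<le> s * Q" using Qb(1) s0 by (metis mult.left_commute mult_left_mono)
      have i2: "\<mu> * (s\<^sup>2 * t) \<le> s\<^sup>2 * V"
      proof -
        have "\<mu> * t \<le> V" using tb(2) mup by (simp add: field_simps)
        then show ?thesis by (metis mult.left_commute mult_left_mono zero_le_power2)
      qed
      have "s * V + Q = X" using XQ by simp
      also have "X = - P - a * U" using d1 by simp
      also have "\<dots> \<le> L * U" using PL True U0 by (smt (verit) mult_nonneg_nonneg)
      finally have i3: "s * V + Q \<le> L * U" .
      have "\<mu> * (s * V + s\<^sup>2 * t) \<le> s * (s * V + Q)" using i1 i2 by (simp add: algebra_simps power2_eq_square)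
      also have "\<dots> \<le> s * (L * U)" using i3 s0 by (simp add: mult_left_mono)
      also have "s * L \<le> \<mu> * a / 2"
      proof -
        have "a * (2 * L) \<le> a * (\<mu> * r)" using rmu True by (simp add: mult_left_mono)
        then show ?thesis using rp by (simp add: s_def field_simps)
      qed
      then have "s * (L * U) \<le> \<mu> * a / 2 * U" using U0 by (metis mult.assoc mult_right_mono)
      finally have "\<mu> * (s * V + s\<^sup>2 * t) \<le> \<mu> * (a * U / 2)" by simp
      then have "s * V + s\<^sup>2 * t \<le> a * U / 2" using mup by simp
      then have "mux * U \<le> - a * U / 2" using S1 by linarith
      moreover have "0 \<le> a * U" using True U0 by simp
      ultimately have "mux * U \<le> 0" by linarith
      then show ?thesis using mp U0 by (simp add: mult_le_0_iff)
    next
      case False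
      then have s0: "s < 0" using rp by (simp add: s_def divide_neg_pos)
      have sm: "- s \<le> \<mu> / 16"
      proof -
        have "- a \<le> L / 8" using aa mp by linarith
        then have "- a * (\<mu> * r) \<le> L / 8 * (\<mu> * r)" using mup rp by (intro mult_right_mono) auto
        also have "\<dots> \<le> (\<mu> * r) / 16 * (\<mu> * r)" using rmu mup rp by (intro mult_right_mono) auto
        finally have "- a * (\<mu> * r) \<le> (\<mu> * r) / 16 * (\<mu> * r)" .
        then have "- a \<le> \<mu> * r / 16" by (rule mult_right_le_imp_le) (simp add: mup rp)
        then show ?thesis using rp by (simp add: s_def field_simps)
      qed
      have "s\<^sup>2 * t \<le> s\<^sup>2 * (V / \<mu>)" using mult_left_mono[OF tb(2) zero_le_power2[of s]] .
      moreover have "s * V + s\<^sup>2 * (V / \<mu>) \<le> 0"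
      proof -
        have e: "s * V + s\<^sup>2 * (V / \<mu>) = (s * V / \<mu>) * (\<mu> + s)" using mup by (simp add: field_simps power2_eq_square)
        have n: "s * V / \<mu> \<le> 0" using s0 V0 mup by (simp add: divide_nonpos_pos mult_nonpos_nonneg)
        have p: "0 \<le> \<mu> + s" using sm mup by linarith
        show ?thesis unfolding e using mult_nonpos_nonneg[OF n p] .
      qed
      ultimately have "mux * U \<le> - a * U" using S1 by linarith
      also have "- a * U \<le> mux / 8 * U" using aa U0 by (intro mult_right_mono) auto
      finally have "mux * U \<le> mux / 8 * U" .
      then have "mux * U \<le> 0" by linarith
      then show ?thesis using mp U0 by (simp add: mult_le_0_iff)
    qed
    then have "u = 0" by (simp add: U_def)
    then have "X = 0" by (simp add: X_def)
    then have QsV: "Q = - s * V" using XQ by simp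
    have "V \<le> 0"
    proof (cases "0 \<le> a")
      case True
      then have "0 \<le> s * V" using rp V0 by (simp add: s_def)
      then have "\<mu> * V \<le> 0" using Qb(1) QsV by linarith
      then show ?thesis using mup by (auto simp: mult_le_0_iff)
    next
      case False
      have "- a \<le> L / 8" using aa mp by linarith
      have "- s \<le> \<mu> / 16"
      proof -
        have "- a * (\<mu> * r) \<le> L / 8 * (\<mu> * r)" using \<open>- a \<le> L / 8\<close> mup rp by (intro mult_right_mono) auto
        also have "\<dots> \<le> (\<mu> * r) / 16 * (\<mu> * r)" using rmu mup rp by (intro mult_right_mono) auto
        finally have "- a * (\<mu> * r) \<le> (\<mu> * r) / 16 * (\<mu> * r)" .
        then have "- a \<le> \<mu> * r / 16" by (rule mult_right_le_imp_le) (simp add: mup rp)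
        then show ?thesis using rp by (simp add: s_def field_simps)
      qed
      then have "- s * V \<le> \<mu> / 16 * V" using V0 by (intro mult_right_mono) auto
      then have "\<mu> * V \<le> \<mu> / 16 * V" using Qb(1) QsV by linarith
      then have "\<mu> * V \<le> 0" by linarith
      then show ?thesis using mup by (auto simp: mult_le_0_iff)
    qed
    then show False using UV \<open>U = 0\<close> V0 by linarith
  qed
qed

end


lemma cs2:
  fixes u1 u2 p1 p2 :: "real^'n"
  shows "(u1 \<bullet> p1 + u2 \<bullet> p2)\<^sup>2 + (u1 \<bullet> p2 - u2 \<bullet> p1)\<^sup>2 \<le> (u1 \<bullet> u1 + u2 \<bullet> u2) * (p1 \<bullet> p1 + p2 \<bullet> p2)"
proof -
  define \<alpha> where "\<alpha> = u1 \<bullet> p1 + u2 \<bullet> p2"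
  define \<beta> where "\<beta> = u1 \<bullet> p2 - u2 \<bullet> p1"
  define N where "N = \<alpha>\<^sup>2 + \<beta>\<^sup>2"
  define y1 where "y1 = \<alpha> *\<^sub>R p1 + \<beta> *\<^sub>R p2"
  define y2 where "y2 = \<alpha> *\<^sub>R p2 - \<beta> *\<^sub>R p1"
  have h1: "u1 \<bullet> y1 + u2 \<bullet> y2 = N"
    by (simp add: y1_def y2_def N_def inner_add_right inner_diff_right \<alpha>_def \<beta>_def power2_eq_square algebra_simps)
  have h2: "y1 \<bullet> y1 + y2 \<bullet> y2 = N * (p1 \<bullet> p1 + p2 \<bullet> p2)"
    by (simp add: y1_def y2_def N_def inner_add_right inner_diff_right inner_add_left inner_diff_left
        inner_commute power2_eq_square algebra_simps)
  define a1 where "a1 = norm u1"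
  define a2 where "a2 = norm u2"
  define b1 where "b1 = norm y1"
  define b2 where "b2 = norm y2"
  have c1: "\<bar>u1 \<bullet> y1\<bar> \<le> a1 * b1" unfolding a1_def b1_def by (rule Cauchy_Schwarz_ineq2)
  have c2: "\<bar>u2 \<bullet> y2\<bar> \<le> a2 * b2" unfolding a2_def b2_def by (rule Cauchy_Schwarz_ineq2)
  have "\<bar>N\<bar> \<le> a1 * b1 + a2 * b2" using c1 c2 h1 by linarith
  then have "N\<^sup>2 \<le> (a1 * b1 + a2 * b2)\<^sup>2"
    by (metis abs_le_square_iff abs_of_nonneg a1_def a2_def b1_def b2_def add_nonneg_nonneg mult_nonneg_nonneg norm_ge_zero)
  also have "\<dots> \<le> (a1\<^sup>2 + a2\<^sup>2) * (b1\<^sup>2 + b2\<^sup>2)"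
  proof -
    have "0 \<le> (a1 * b2 - a2 * b1)\<^sup>2" by simp
    then show ?thesis by (simp add: power2_eq_square algebra_simps)
  qed
  also have "a1\<^sup>2 + a2\<^sup>2 = u1 \<bullet> u1 + u2 \<bullet> u2" by (simp add: a1_def a2_def dot_square_norm)
  also have "b1\<^sup>2 + b2\<^sup>2 = N * (p1 \<bullet> p1 + p2 \<bullet> p2)" by (simp add: b1_def b2_def dot_square_norm[symmetric] h2)
  finally have main: "N * N \<le> N * ((u1 \<bullet> u1 + u2 \<bullet> u2) * (p1 \<bullet> p1 + p2 \<bullet> p2))"
    by (simp add: power2_eq_square algebra_simps)
  have N0: "0 \<le> N" by (simp add: N_def)
  show ?thesis
  proof (cases "N = 0")
    case True
    then show ?thesis unfolding N_def[symmetric] \<alpha>_def[symmetric] \<beta>_def[symmetric] by simp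
  next
    case False
    then have "0 < N" using N0 by simp
    then have "N \<le> (u1 \<bullet> u1 + u2 \<bullet> u2) * (p1 \<bullet> p1 + p2 \<bullet> p2)" using main by simp
    then show ?thesis by (simp add: N_def \<alpha>_def \<beta>_def)
  qed
qed

context SP begin

lemma cplx_case:
  assumes ev1: "block_M r A B C *v w1 = a *\<^sub>R w1 - b *\<^sub>R w2"
    and ev2: "block_M r A B C *v w2 = b *\<^sub>R w1 + a *\<^sub>R w2"
    and b0: "b \<noteq> 0" and nz: "w1 \<noteq> 0 \<or> w2 \<noteq> 0"
  shows "a \<le> (L - \<mu> * r) / 2" "a\<^sup>2 + b\<^sup>2 \<le> 2 * L\<^sup>2 * r"
proof -
  define u1 where "u1 = tp w1"
  define u2 where "u2 = tp w2"
  define v1 where "v1 = bt w1"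
  define v2 where "v2 = bt w2"
  have t1: "- (C *v u1) - B *v v1 = a *\<^sub>R u1 - b *\<^sub>R u2"
    using arg_cong[OF ev1, of tp] by (simp add: tp_M tp_ops u1_def u2_def v1_def)
  have t2: "- (C *v u2) - B *v v2 = b *\<^sub>R u1 + a *\<^sub>R u2"
    using arg_cong[OF ev2, of tp] by (simp add: tp_M tp_ops u1_def u2_def v2_def)
  have b1: "r *\<^sub>R (transpose B *v u1) - r *\<^sub>R (A *v v1) = a *\<^sub>R v1 - b *\<^sub>R v2"
    using arg_cong[OF ev1, of bt] by (simp add: bt_M bt_ops u1_def v1_def v2_def)
  have b2: "r *\<^sub>R (transpose B *v u2) - r *\<^sub>R (A *v v2) = b *\<^sub>R v1 + a *\<^sub>R v2"
    using arg_cong[OF ev2, of bt] by (simp add: bt_M bt_ops u2_def v1_def v2_def)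
  define U where "U = u1 \<bullet> u1 + u2 \<bullet> u2"
  define V where "V = v1 \<bullet> v1 + v2 \<bullet> v2"
  define P where "P = u1 \<bullet> (C *v u1) + u2 \<bullet> (C *v u2)"
  define Q where "Q = v1 \<bullet> (A *v v1) + v2 \<bullet> (A *v v2)"
  define XR where "XR = u1 \<bullet> (B *v v1) + u2 \<bullet> (B *v v2)"
  define XI where "XI = u1 \<bullet> (B *v v2) - u2 \<bullet> (B *v v1)"
  have U0: "0 \<le> U" and V0: "0 \<le> V" by (simp_all add: U_def V_def add_nonneg_nonneg)
  have UV: "0 < U + V"
  proof -
    have "w1 \<bullet> w1 + w2 \<bullet> w2 = U + V" by (simp add: inner_split U_def V_def u1_def u2_def v1_def v2_def)
    moreover have "0 < w1 \<bullet> w1 + w2 \<bullet> w2" using nz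
      by (metis add_nonneg_pos add_pos_nonneg inner_ge_zero inner_gt_zero_iff)
    ultimately show ?thesis by simp
  qed
  have BT: "\<And>x y. y \<bullet> (transpose B *v x) = x \<bullet> (B *v y)" by (simp add: inner_mat_T inner_commute)
  have BT': "\<And>x y. y \<bullet> (x v* B) = x \<bullet> (B *v y)" using BT by (metis transpose_matrix_vector)
  have Cs: "u1 \<bullet> (C *v u2) = u2 \<bullet> (C *v u1)" by (rule inner_sym[OF symC])
  have As: "v1 \<bullet> (A *v v2) = v2 \<bullet> (A *v v1)" by (rule inner_sym[OF symA])
  have i11: "- (u1 \<bullet> (C *v u1)) - u1 \<bullet> (B *v v1) = a * (u1 \<bullet> u1) - b * (u1 \<bullet> u2)"
    using arg_cong[OF t1, of "inner u1"] by (simp add: inner_diff_right)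
  have i22: "- (u2 \<bullet> (C *v u2)) - u2 \<bullet> (B *v v2) = b * (u2 \<bullet> u1) + a * (u2 \<bullet> u2)"
    using arg_cong[OF t2, of "inner u2"] by (simp add: inner_add_right inner_diff_right)
  have i12: "- (u1 \<bullet> (C *v u2)) - u1 \<bullet> (B *v v2) = b * (u1 \<bullet> u1) + a * (u1 \<bullet> u2)"
    using arg_cong[OF t2, of "inner u1"] by (simp add: inner_add_right inner_diff_right)
  have i21: "- (u2 \<bullet> (C *v u1)) - u2 \<bullet> (B *v v1) = a * (u2 \<bullet> u1) - b * (u2 \<bullet> u2)"
    using arg_cong[OF t1, of "inner u2"] by (simp add: inner_diff_right)
  have j11: "r * (u1 \<bullet> (B *v v1)) - r * (v1 \<bullet> (A *v v1)) = a * (v1 \<bullet> v1) - b * (v1 \<bullet> v2)"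
    using arg_cong[OF b1, of "inner v1"] by (simp add: inner_diff_right BT BT')
  have j22: "r * (u2 \<bullet> (B *v v2)) - r * (v2 \<bullet> (A *v v2)) = b * (v2 \<bullet> v1) + a * (v2 \<bullet> v2)"
    using arg_cong[OF b2, of "inner v2"] by (simp add: inner_add_right inner_diff_right BT BT')
  have j21: "r * (u1 \<bullet> (B *v v2)) - r * (v2 \<bullet> (A *v v1)) = a * (v2 \<bullet> v1) - b * (v2 \<bullet> v2)"
    using arg_cong[OF b1, of "inner v2"] by (simp add: inner_diff_right BT BT')
  have j12: "r * (u2 \<bullet> (B *v v1)) - r * (v1 \<bullet> (A *v v2)) = b * (v1 \<bullet> v1) + a * (v1 \<bullet> v2)"
    using arg_cong[OF b2, of "inner v1"] by (simp add: inner_add_right inner_diff_right BT BT')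
  have E1: "- P - XR = a * U"
    using i11 i22 by (simp add: P_def XR_def U_def inner_commute algebra_simps)
  have E2: "- XI = b * U"
    using i12 i21 Cs by (simp add: XI_def U_def inner_commute algebra_simps)
  have E3: "r * XR - r * Q = a * V"
    using j11 j22 by (simp add: Q_def XR_def V_def inner_commute algebra_simps)
  have E4: "r * XI = - b * V"
    using j21 j12 As by (simp add: XI_def V_def inner_commute algebra_simps)
  have VrU: "V = r * U"
  proof -
    have x: "XI = - (b * U)" using E2 by simp
    have "r * (- (b * U)) = - b * V" using E4 unfolding x .
    then have "b * (r * U) = b * V" by (simp add: algebra_simps)
    then show ?thesis using b0 by simp
  qed
  have Upos: "0 < U"
  proof (rule ccontr)
    assume "\<not> 0 < U"
    then have "U = 0" using U0 by simp
    then have "V = 0" using VrU by simp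
    then show False using UV \<open>U = 0\<close> by simp
  qed
  have CS: "XR\<^sup>2 + XI\<^sup>2 \<le> U * (L\<^sup>2 * V)"
  proof -
    have "XR\<^sup>2 + XI\<^sup>2 \<le> U * ((B *v v1) \<bullet> (B *v v1) + (B *v v2) \<bullet> (B *v v2))"
      unfolding XR_def XI_def U_def by (rule cs2)
    also have "(B *v v1) \<bullet> (B *v v1) + (B *v v2) \<bullet> (B *v v2) \<le> L\<^sup>2 * V"
    proof -
      have "(B *v x) \<bullet> (B *v x) \<le> L\<^sup>2 * (x \<bullet> x)" for x
      proof -
        have "norm (B *v x) \<le> L * norm x" by (rule normB)
        then have "(norm (B *v x))\<^sup>2 \<le> (L * norm x)\<^sup>2" by (intro power_mono) auto
        then show ?thesis by (simp add: dot_square_norm power_mult_distrib)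
      qed
      from this[of v1] this[of v2] show ?thesis unfolding V_def distrib_left by (rule add_mono)
    qed
    then have "U * ((B *v v1) \<bullet> (B *v v1) + (B *v v2) \<bullet> (B *v v2)) \<le> U * (L\<^sup>2 * V)"
      using U0 by (rule mult_left_mono)
    finally show ?thesis .
  qed
  have PL: "\<bar>P\<bar> \<le> L * U" using qC[of u1] qC[of u2] by (simp add: P_def U_def algebra_simps)
  have Qb: "\<mu> * V \<le> Q" "Q \<le> L * V" using qA[of v1] qA[of v2] by (simp_all add: Q_def V_def algebra_simps)
  have aU: "2 * a * U = - P - Q"
  proof -
    have "r * XR - r * Q = r * (a * U)" using E3 VrU by simp
    then have "XR - Q = a * U" using rpos by (simp add: right_diff_distrib[symmetric])
    then show ?thesis using E1 by simp
  qed
  have XRv: "XR = (Q - P) / 2" using E1 aU by simp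
  have XIv: "XI = - b * U" using E2 by simp
  show "a \<le> (L - \<mu> * r) / 2"
  proof -
    have "\<mu> * r * U \<le> Q" using Qb(1) VrU by (simp add: mult.assoc)
    then have "2 * a * U \<le> (L - \<mu> * r) * U" using aU PL by (simp add: algebra_simps)
    then show ?thesis using Upos by (simp add: mult.commute)
  qed
  show "a\<^sup>2 + b\<^sup>2 \<le> 2 * L\<^sup>2 * r"
  proof -
    have "(a\<^sup>2 + b\<^sup>2) * U\<^sup>2 = (P + Q)\<^sup>2 / 4 + XI\<^sup>2"
    proof -
      have h: "a * U = - (P + Q) / 2" using aU by (simp add: algebra_simps)
      have "(a * U)\<^sup>2 = (P + Q)\<^sup>2 / 4" unfolding h by (simp add: power_divide power2_eq_square algebra_simps)
      moreover have "(b * U)\<^sup>2 = XI\<^sup>2" using XIv by (simp add: power2_eq_square)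
      ultimately show ?thesis by (simp add: power_mult_distrib algebra_simps)
    qed
    also have "\<dots> \<le> (P + Q)\<^sup>2 / 4 + (L\<^sup>2 * r * U\<^sup>2 - (Q - P)\<^sup>2 / 4)"
    proof -
      have "XR\<^sup>2 = (Q - P)\<^sup>2 / 4" unfolding XRv by (simp add: power_divide)
      moreover have "U * (L\<^sup>2 * V) = L\<^sup>2 * r * U\<^sup>2" using VrU by (simp add: power2_eq_square algebra_simps)
      ultimately show ?thesis using CS by linarith
    qed
    also have "\<dots> = P * Q + L\<^sup>2 * r * U\<^sup>2" by (simp add: power2_eq_square field_simps)
    also have "P * Q \<le> L\<^sup>2 * r * U\<^sup>2"
    proof -
      have "0 \<le> \<mu> * V" using V0 mu_pos by simp
      then have Q0: "0 \<le> Q" using Qb(1) by linarith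
      have "P * Q \<le> (L * U) * Q" using PL Q0 by (intro mult_right_mono) auto
      also have "\<dots> \<le> (L * U) * (L * V)" using Qb(2) Lpos U0 by (intro mult_left_mono) auto
      finally show ?thesis using VrU by (simp add: power2_eq_square algebra_simps)
    qed
    finally have "(a\<^sup>2 + b\<^sup>2) * U\<^sup>2 \<le> (2 * L\<^sup>2 * r) * U\<^sup>2" by (simp add: algebra_simps)
    then show ?thesis using Upos by simp
  qed
qed

end


lemma sqrt_bound: "x \<le> y\<^sup>2 \<Longrightarrow> 0 \<le> y \<Longrightarrow> sqrt x \<le> (y::real)"
  using real_sqrt_le_mono[of x "y\<^sup>2"] by simp

context SP begin

definition eta where "eta = 1 / (4 * r * L)"
definition del where "del = mux / (64 * r * L)"

lemma eig_bound:
  assumes "l \<in> complex_eigenvalues (block_M r A B C)"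
  shows "cmod (1 + complex_of_real eta * l) \<le> 1 - del"
    "cmod (1 + complex_of_real eta * l + (complex_of_real eta)\<^sup>2 * l\<^sup>2) \<le> 1 - del"
proof -
  obtain w where w: "w \<noteq> 0" "cmat (block_M r A B C) *v w = l *s w"
    using assms unfolding complex_eigenvalues_def by (auto simp only: mem_Collect_eq)
  define a where "a = Re l"
  define b where "b = Im l"
  have ev1: "block_M r A B C *v rv w = a *\<^sub>R rv w - b *\<^sub>R iv w"
    using arg_cong[OF w(2), of rv] by (simp add: rv_cmat rv_scale a_def b_def)
  have ev2: "block_M r A B C *v iv w = b *\<^sub>R rv w + a *\<^sub>R iv w"
    using arg_cong[OF w(2), of iv] by (simp add: iv_cmat iv_scale a_def b_def)
  have nz: "rv w \<noteq> 0 \<or> iv w \<noteq> 0" using rv_iv_0[OF w(1)] .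
  have Lp: "0 < L" by (rule Lpos)
  have rp: "0 < r" by (rule rpos)
  have mp: "0 < mux" "mux \<le> L" by (rule mux(1), rule mux(2))
  have ep: "0 < eta" using Lp rp by (simp add: eta_def)
  have d0: "0 \<le> del" using mp Lp rp by (simp add: del_def)
  have d1: "del \<le> 1"
  proof -
    have "mux \<le> 64 * r * L" using mp r2 Lp by (smt (verit) mult_le_cancel_right1)
    then show ?thesis using Lp rp by (simp add: del_def)
  qed
  have lc: "l = Complex a b" by (simp add: a_def b_def)
  have n1: "cmod (1 + complex_of_real eta * l) = sqrt ((1 + eta * a)\<^sup>2 + (eta * b)\<^sup>2)"
    by (simp add: norm_complex_def lc)
  have n2: "cmod (1 + complex_of_real eta * l + (complex_of_real eta)\<^sup>2 * l\<^sup>2)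
      = sqrt ((1 + eta * a + (eta * a)\<^sup>2 - (eta * b)\<^sup>2)\<^sup>2 + (eta * b + 2 * (eta * a) * (eta * b))\<^sup>2)"
    by (simp add: norm_complex_def lc power2_eq_square algebra_simps)
  have "(1 + eta * a)\<^sup>2 + (eta * b)\<^sup>2 \<le> (1 - del)\<^sup>2 \<and>
        (1 + eta * a + (eta * a)\<^sup>2 - (eta * b)\<^sup>2)\<^sup>2 + (eta * b + 2 * (eta * a) * (eta * b))\<^sup>2 \<le> (1 - del)\<^sup>2"
  proof (cases "b = 0")
    case True
    obtain v where v: "block_M r A B C *v v = a *\<^sub>R v" "v \<noteq> 0"
      using nz ev1 ev2 True by auto
    have ra: "- (r * L) \<le> a" "a \<le> - mux / 8" using real_case[OF v] by auto
    define z where "z = eta * a"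
    have z1: "-1/4 \<le> z"
    proof -
      have "eta * (- (r * L)) \<le> eta * a" using ra(1) ep by (intro mult_left_mono) auto
      then show ?thesis using Lp rp by (simp add: z_def eta_def)
    qed
    have z2: "z \<le> -2 * del"
    proof -
      have "eta * a \<le> eta * (- mux / 8)" using ra(2) ep by (intro mult_left_mono) auto
      then show ?thesis using Lp rp by (simp add: z_def eta_def del_def mult.commute)
    qed
    have h1: "\<bar>1 + z\<bar> \<le> \<bar>1 - del\<bar>" "\<bar>1 + z + z\<^sup>2\<bar> \<le> \<bar>1 - del\<bar>"
      using numR[OF z1 z2 d0] d1 by auto
    have "(1 + z)\<^sup>2 \<le> (1 - del)\<^sup>2" "(1 + z + z\<^sup>2)\<^sup>2 \<le> (1 - del)\<^sup>2"
      using h1 abs_le_square_iff by blast+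
    then show ?thesis using True by (simp add: z_def)
  next
    case False
    have ca: "a \<le> (L - \<mu> * r) / 2" and cb: "a\<^sup>2 + b\<^sup>2 \<le> 2 * L\<^sup>2 * r"
      using cplx_case[OF ev1 ev2 False nz] by auto
    have mup: "0 < \<mu>" by (rule mu_pos)
    have rm: "2 * L \<le> \<mu> * r" by (rule rmu)
    define k where "k = \<mu> / L"
    have k: "0 < k" "k \<le> 1" using mup Lp muL by (auto simp: k_def)
    have hx: "eta * a \<le> - k / 16"
    proof -
      have "2 * a \<le> L - \<mu> * r" using ca by simp
      then have "a \<le> - (\<mu> * r) / 4" using rm by linarith
      then have "eta * a \<le> eta * (- (\<mu> * r) / 4)" using ep by (intro mult_left_mono) auto
      also have "eta * (- (\<mu> * r) / 4) = - k / 16" using Lp rp by (simp add: eta_def k_def field_simps)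
      finally show ?thesis .
    qed
    have hs: "(eta * a)\<^sup>2 + (eta * b)\<^sup>2 \<le> k / 16"
    proof -
      have "(eta * a)\<^sup>2 + (eta * b)\<^sup>2 = eta\<^sup>2 * (a\<^sup>2 + b\<^sup>2)" by (simp add: power_mult_distrib algebra_simps)
      also have "\<dots> \<le> eta\<^sup>2 * (2 * L\<^sup>2 * r)" using cb by (intro mult_left_mono) auto
      also have "eta\<^sup>2 * (2 * L\<^sup>2 * r) = 1 / (8 * r)" using Lp rp by (simp add: eta_def field_simps power2_eq_square)
      also have "1 / (8 * r) \<le> k / 16"
      proof -
        have "16 * L \<le> \<mu> * (8 * r)" using rm by linarith
        then show ?thesis using Lp rp by (simp add: k_def field_simps)
      qed
      finally show ?thesis .
    qed
    have hd: "del \<le> k / 128"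
    proof -
      have "mux \<le> \<mu> * r / 2" using rm mp by linarith
      then have "mux / (64 * r * L) \<le> (\<mu> * r / 2) / (64 * r * L)" using Lp rp
        by (intro divide_right_mono) auto
      also have "(\<mu> * r / 2) / (64 * r * L) = k / 128" using Lp rp by (simp add: k_def)
      finally show ?thesis by (simp add: del_def)
    qed
    show ?thesis using numC[OF hx hs k d0 hd] by simp

  qed
  then show "cmod (1 + complex_of_real eta * l) \<le> 1 - del"
    "cmod (1 + complex_of_real eta * l + (complex_of_real eta)\<^sup>2 * l\<^sup>2) \<le> 1 - del"
    unfolding n1 n2 using d1 by (auto intro!: sqrt_bound)
qed

end

theorem lemma2:
  fixes A :: "real^'m^'m" and B :: "real^'m^'n" and C :: "real^'n^'n"
    and L \<mu> r :: real
  assumes "0 < \<mu>" and "\<mu> \<le> L"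
    and "transpose A = A" and "transpose C = C"
    and "loewner_le (\<mu> *\<^sub>R mat 1) A" and "loewner_le A (L *\<^sub>R mat 1)"
    and "spec_norm B \<le> L" and "spec_norm C \<le> L"
    and "pos_def_mat (C + B ** matrix_inv A ** transpose B)"
    and "r \<ge> 2 * (L / \<mu>)"
  shows "let \<mu>x = min L (lambda_min (C + B ** matrix_inv A ** transpose B));
             \<kappa>x = L / \<mu>x;
             \<eta>x = 1 / (4 * r * L);
             \<eta>y = 1 / (4 * L);
             M = block_M r A B C;
             I = (mat 1 :: real^('n + 'm)^('n + 'm));
             \<rho>1 = spectral_radius (I + \<eta>x *\<^sub>R M);
             \<rho>2 = spectral_radius (I + \<eta>x *\<^sub>R M + \<eta>x\<^sup>2 *\<^sub>R (M ** M))
         in max \<rho>1 \<rho>2 \<le> 1 - 1 / (64 * r * \<kappa>x)"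
proof -
  interpret SP A B C L \<mu> r by (rule SP.intro; fact)
  have e: "1 / (4 * r * L) = eta" by (simp add: eta_def)
  have e0: "eta \<noteq> 0" using Lpos rpos by (simp add: eta_def)
  have dd: "1 - 1 / (64 * r * (L / min L (lambda_min (C + B ** matrix_inv A ** transpose B)))) = 1 - del"
    using Lpos mux(1) unfolding mux_def[symmetric] del_def by simp
  have r1: "spectral_radius (mat 1 + eta *\<^sub>R block_M r A B C) \<le> 1 - del"
    unfolding spectral_radius_def
  proof (subst Max_le_iff)
    show "finite (cmod ` complex_eigenvalues (mat 1 + eta *\<^sub>R block_M r A B C))"
      by (rule finite_imageI[OF ceig_finite])
    show "cmod ` complex_eigenvalues (mat 1 + eta *\<^sub>R block_M r A B C) \<noteq> {}"
      using ceig_ne by blast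
    show "\<forall>a\<in>cmod ` complex_eigenvalues (mat 1 + eta *\<^sub>R block_M r A B C). a \<le> 1 - del"
    proof
      fix x assume "x \<in> cmod ` complex_eigenvalues (mat 1 + eta *\<^sub>R block_M r A B C)"
      then obtain c where c: "c \<in> complex_eigenvalues (mat 1 + eta *\<^sub>R block_M r A B C)" "x = cmod c" by blast
      obtain l where l: "l \<in> complex_eigenvalues (block_M r A B C)" "c = 1 + complex_of_real eta * l"
        using eig_N1[OF c(1) e0] by blast
      show "x \<le> 1 - del" using eig_bound(1)[OF l(1)] c(2) l(2) by simp
    qed
  qed
  have r2: "spectral_radius (mat 1 + eta *\<^sub>R block_M r A B C + eta\<^sup>2 *\<^sub>R (block_M r A B C ** block_M r A B C)) \<le> 1 - del"
    unfolding spectral_radius_def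
  proof (subst Max_le_iff)
    show "finite (cmod ` complex_eigenvalues (mat 1 + eta *\<^sub>R block_M r A B C + eta\<^sup>2 *\<^sub>R (block_M r A B C ** block_M r A B C)))"
      by (rule finite_imageI[OF ceig_finite])
    show "cmod ` complex_eigenvalues (mat 1 + eta *\<^sub>R block_M r A B C + eta\<^sup>2 *\<^sub>R (block_M r A B C ** block_M r A B C)) \<noteq> {}"
      using ceig_ne by blast
    show "\<forall>a\<in>cmod ` complex_eigenvalues (mat 1 + eta *\<^sub>R block_M r A B C + eta\<^sup>2 *\<^sub>R (block_M r A B C ** block_M r A B C)). a \<le> 1 - del"
    proof
      fix x assume "x \<in> cmod ` complex_eigenvalues (mat 1 + eta *\<^sub>R block_M r A B C + eta\<^sup>2 *\<^sub>R (block_M r A B C ** block_M r A B C))"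
      then obtain c where c: "c \<in> complex_eigenvalues (mat 1 + eta *\<^sub>R block_M r A B C + eta\<^sup>2 *\<^sub>R (block_M r A B C ** block_M r A B C))" "x = cmod c" by blast
      obtain l where l: "l \<in> complex_eigenvalues (block_M r A B C)"
          "c = 1 + complex_of_real eta * l + (complex_of_real eta)\<^sup>2 * l\<^sup>2"
        using eig_N2[OF c(1) e0] by blast
      show "x \<le> 1 - del" using eig_bound(2)[OF l(1)] c(2) l(2) by simp
    qed
  qed
  show ?thesis unfolding Let_def e dd using r1 r2 by simp
qed


end
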